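(* The $3N$ functions $E_m^{(k)}$ ($k=1,2,3$; $m=0,1,\dots,N-1$) are functionally independent on a dense open subset of $\mathbb R^{6N}$; that is, there is a dense open subset of $\mathbb R^{6N}$ at every point of which the Jacobian matrix of $(E_0^{(1)},\dots,E_{N-1}^{(1)},E_0^{(2)},\dots,E_{N-1}^{(2)},E_0^{(3)},\dots,E_{N-1}^{(3)})$ with respect to the $6N$ real coordinates $(\operatorname{Re}\phi_{j\alpha},\operatorname{Im}\phi_{j\alpha})$ has rank $3N$.
   Context: Fix $N\ge1$ and distinct nonzero real $\lambda_1,\dots,\lambda_N$. Phase space $\mathbb C^{3N}\cong\mathbb R^{6N}$ with complex coordinates $\phi_{j\alpha}$ ($j=1,2,3$, $\alpha=1,\dots,N$). $L(\lambda)=C+\sum_\alpha(\lambda-\lambda_\alpha)^{-1}F_\alpha F_\alpha^*$ with $C=\operatorname{diag}(1,-1,0)$, $F_\alpha=(\phi_{1\alpha},\phi_{2\alpha},\phi_{3\alpha})^T$. Define $p_1,p_2,p_3$ by $\det(\xi I-L(\lambda))=\xi^3-p_1(\lambda)\xi^2+p_2(\lambda)\xi-p_3(\lambda)$, and $E_m^{(k)}$ by the Laurent expansion $p_k(\lambda)=\sum_{m=-1}^\infty E_m^{(k)}\lambda^{-m-1}$ for $|\lambda|>\max_\alpha|\lambda_\alpha|$. Each $E_m^{(k)}$ is a real-valued polynomial function of $\phi_{j\alpha},\bar\phi_{j\alpha}$. *)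

theory Defs
  imports "HOL-Analysis.Analysis" "HOL-Computational_Algebra.Polynomial"
begin

text \<open>Index conventions: matrix/vector indices j = 1,2,3 are the elements 1,2,3 of the
numeral type 3 (where 3 = 0 in that type).  Particles alpha range over a finite type 'n,
so N = CARD('n).  A phase-space point is phi :: complex^3^'n with phi$alpha$j = phi_{j alpha}.\<close>

definition Cmat :: "complex^3^3" where
  "Cmat = (\<chi> i j. if i = j \<and> i = 1 then 1 else if i = j \<and> i = 2 then -1 else 0)"

definition Lmat :: "('n::finite \<Rightarrow> real) \<Rightarrow> complex^3^'n \<Rightarrow> complex \<Rightarrow> complex^3^3" where
  "Lmat lam phi z = Cmat + (\<Sum>a\<in>UNIV. (\<chi> i j. inverse (z - complex_of_real (lam a))
        * (phi$a$i * cnj (phi$a$j))))"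

definition charpoly3 :: "complex^3^3 \<Rightarrow> complex poly" where
  "charpoly3 A = det (\<chi> i j. (if i = j then [:0, 1:] else 0) - [:A$i$j:])"

text \<open>det(xi I - A) = xi^3 - p1 xi^2 + p2 xi - p3, i.e. p_k = (-1)^k * coeff (3-k)\<close>
definition pcoef :: "nat \<Rightarrow> complex^3^3 \<Rightarrow> complex" where
  "pcoef k A = (-1)^k * coeff (charpoly3 A) (3 - k)"

definition pfun :: "('n::finite \<Rightarrow> real) \<Rightarrow> nat \<Rightarrow> complex^3^'n \<Rightarrow> complex \<Rightarrow> complex" where
  "pfun lam k phi z = pcoef k (Lmat lam phi z)"

text \<open>Laurent coefficients at infinity: p_k(z) = sum_{n>=0} c n * z^(-n) for
 |z| > max |lambda_alpha|; thus c n = E_{n-1}^{(k)}.\<close>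
definition laurent_coeffs :: "('n::finite \<Rightarrow> real) \<Rightarrow> nat \<Rightarrow> complex^3^'n \<Rightarrow> nat \<Rightarrow> complex" where
  "laurent_coeffs lam k phi = (THE c. \<forall>z. norm z > Max ((\<lambda>a. \<bar>lam a\<bar>) ` UNIV) \<longrightarrow>
        (\<lambda>n. c n * inverse z ^ n) sums pfun lam k phi z)"

definition Ecoef :: "('n::finite \<Rightarrow> real) \<Rightarrow> nat \<Rightarrow> nat \<Rightarrow> complex^3^'n \<Rightarrow> real" where
  "Ecoef lam k m phi = Re (laurent_coeffs lam k phi (m + 1))"

definition phi_of :: "real^('n::finite \<times> 3 \<times> 2) \<Rightarrow> complex^3^'n" where
  "phi_of x = (\<chi> a j. Complex (x$(a, j, 1)) (x$(a, j, 2)))"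

definition knat :: "3 \<Rightarrow> nat" where
  "knat k = (if k = 1 then 1 else if k = 2 then 2 else 3)"

text \<open>The vector of the 3N functions; row (k, a) is E_{iota a}^{(k)}, where iota enumerates 'n as 0..N-1.\<close>
definition Emap :: "('n::finite \<Rightarrow> real) \<Rightarrow> ('n \<Rightarrow> nat) \<Rightarrow> real^('n \<times> 3 \<times> 2) \<Rightarrow> real^(3 \<times> 'n)" where
  "Emap lam iota x = (\<chi> r. Ecoef lam (knat (fst r)) (iota (snd r)) (phi_of x))"

end

theory Submission
  imports Defs
begin


inductive hp :: "nat \<Rightarrow> (real^'v::finite \<Rightarrow> real) \<Rightarrow> bool" where
  hp_const: "hp 0 (\<lambda>x. c)"
| hp_zero: "hp k (\<lambda>x. 0)"
| hp_coord: "hp 1 (\<lambda>x. x$v)"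
| hp_add: "hp k f \<Longrightarrow> hp k g \<Longrightarrow> hp k (\<lambda>x. f x + g x)"
| hp_mult: "hp i f \<Longrightarrow> hp j g \<Longrightarrow> hp (i+j) (\<lambda>x. f x * g x)"
| hp_mono: "hp (Suc k) f \<Longrightarrow> hp k f"

lemma hp_mono_le: "hp k f \<Longrightarrow> j \<le> k \<Longrightarrow> hp j f"
proof (induction k arbitrary: j)
  case 0 then show ?case by simp
next
  case (Suc k) then show ?case
    by (metis hp_mono le_Suc_eq)
qed

lemma hp_mult': "hp i f \<Longrightarrow> hp j g \<Longrightarrow> k \<le> i + j \<Longrightarrow> hp k (\<lambda>x. f x * g x)"
  using hp_mult hp_mono_le by blast

lemma hp_sum: "finite A \<Longrightarrow> (\<And>a. a \<in> A \<Longrightarrow> hp k (f a)) \<Longrightarrow> hp k (\<lambda>x. \<Sum>a\<in>A. f a x)"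
  by (induction A rule: finite_induct) (auto intro: hp_zero hp_add)

lemma hp_prod: "finite A \<Longrightarrow> (\<And>a. a \<in> A \<Longrightarrow> hp 0 (f a)) \<Longrightarrow> hp 0 (\<lambda>x. \<Prod>a\<in>A. f a x)"
proof (induction A rule: finite_induct)
  case empty then show ?case by (simp add: hp_const)
next
  case (insert a A) then show ?case by (simp add: hp_mult'[of 0 _ 0])
qed

lemma hp_neg: "hp k f \<Longrightarrow> hp k (\<lambda>x. - f x)"
  using hp_mult[OF hp_const[of "-1"], of k f] by simp

lemma hp_diff: "hp k f \<Longrightarrow> hp k g \<Longrightarrow> hp k (\<lambda>x. f x - g x)"
  using hp_add[OF _ hp_neg] by (simp only: diff_conv_add_uminus)

lemma hp_cmult: "hp k f \<Longrightarrow> hp k (\<lambda>x. c * f x)"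
  using hp_mult[OF hp_const[of c], of k f] by simp

lemma hp_bound: "hp k f \<Longrightarrow> \<exists>C. \<forall>e::real. \<bar>e\<bar> \<le> 1 \<longrightarrow> \<bar>f (e *\<^sub>R x)\<bar> \<le> C * \<bar>e\<bar>^k"
proof (induction rule: hp.induct)
  case (hp_const c) then show ?case by (intro exI[of _ "\<bar>c\<bar>"]) auto
next
  case (hp_zero k) then show ?case by (intro exI[of _ 0]) auto
next
  case (hp_coord v) then show ?case by (intro exI[of _ "\<bar>x$v\<bar>"]) (auto simp: abs_mult)
next
  case (hp_add k f g)
  then obtain C1 C2 where 1: "\<forall>e::real. \<bar>e\<bar> \<le> 1 \<longrightarrow> \<bar>f (e *\<^sub>R x)\<bar> \<le> C1 * \<bar>e\<bar>^k"
    and 2: "\<forall>e::real. \<bar>e\<bar> \<le> 1 \<longrightarrow> \<bar>g (e *\<^sub>R x)\<bar> \<le> C2 * \<bar>e\<bar>^k" by blast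
  show ?case
  proof (intro exI[of _ "C1 + C2"] allI impI)
    fix e :: real assume e: "\<bar>e\<bar> \<le> 1"
    have f1: "\<bar>f (e *\<^sub>R x)\<bar> \<le> C1 * \<bar>e\<bar>^k" using 1 e by blast
    have g1: "\<bar>g (e *\<^sub>R x)\<bar> \<le> C2 * \<bar>e\<bar>^k" using 2 e by blast
    have "\<bar>f (e *\<^sub>R x) + g (e *\<^sub>R x)\<bar> \<le> \<bar>f (e *\<^sub>R x)\<bar> + \<bar>g (e *\<^sub>R x)\<bar>" by (rule abs_triangle_ineq)
    also have "\<dots> \<le> C1 * \<bar>e\<bar>^k + C2 * \<bar>e\<bar>^k" using f1 g1 by (rule add_mono)
    also have "\<dots> = (C1 + C2) * \<bar>e\<bar>^k" by (simp only: distrib_right)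
    finally show "\<bar>f (e *\<^sub>R x) + g (e *\<^sub>R x)\<bar> \<le> (C1 + C2) * \<bar>e\<bar>^k" .
  qed
next
  case (hp_mult i f j g)
  then obtain C1 C2 where 1: "\<forall>e::real. \<bar>e\<bar> \<le> 1 \<longrightarrow> \<bar>f (e *\<^sub>R x)\<bar> \<le> C1 * \<bar>e\<bar>^i"
    and 2: "\<forall>e::real. \<bar>e\<bar> \<le> 1 \<longrightarrow> \<bar>g (e *\<^sub>R x)\<bar> \<le> C2 * \<bar>e\<bar>^j" by blast
  show ?case
  proof (intro exI[of _ "C1 * C2"] allI impI)
    fix e :: real assume e: "\<bar>e\<bar> \<le> 1"
    have f1: "\<bar>f (e *\<^sub>R x)\<bar> \<le> C1 * \<bar>e\<bar>^i" using 1 e by blast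
    have g1: "\<bar>g (e *\<^sub>R x)\<bar> \<le> C2 * \<bar>e\<bar>^j" using 2 e by blast
    have "\<bar>f (e *\<^sub>R x) * g (e *\<^sub>R x)\<bar> = \<bar>f (e *\<^sub>R x)\<bar> * \<bar>g (e *\<^sub>R x)\<bar>" by (rule abs_mult)
    also have "\<dots> \<le> (C1 * \<bar>e\<bar>^i) * (C2 * \<bar>e\<bar>^j)"
      by (rule mult_mono[OF f1 g1 order.trans[OF abs_ge_zero f1] abs_ge_zero])
    also have "\<dots> = C1 * C2 * \<bar>e\<bar>^(i + j)" by (simp only: power_add mult_ac)
    finally show "\<bar>f (e *\<^sub>R x) * g (e *\<^sub>R x)\<bar> \<le> C1 * C2 * \<bar>e\<bar> ^ (i + j)" .
  qed
next
  case (hp_mono k f)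
  then obtain C where C: "\<forall>e::real. \<bar>e\<bar> \<le> 1 \<longrightarrow> \<bar>f (e *\<^sub>R x)\<bar> \<le> C * \<bar>e\<bar>^Suc k" by blast
  show ?case
  proof (intro exI[of _ "\<bar>C\<bar>"] allI impI)
    fix e :: real assume e: "\<bar>e\<bar> \<le> 1"
    have f1: "\<bar>f (e *\<^sub>R x)\<bar> \<le> C * \<bar>e\<bar>^Suc k" using C e by blast
    have a: "C * \<bar>e\<bar>^Suc k \<le> \<bar>C\<bar> * \<bar>e\<bar>^Suc k" by (rule mult_right_mono) auto
    have b: "\<bar>e\<bar>^Suc k \<le> \<bar>e\<bar>^k" using e by (intro power_decreasing) auto
    have "\<bar>C\<bar> * \<bar>e\<bar>^Suc k \<le> \<bar>C\<bar> * \<bar>e\<bar>^k" by (rule mult_left_mono[OF b]) simp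
    then show "\<bar>f (e *\<^sub>R x)\<bar> \<le> \<bar>C\<bar> * \<bar>e\<bar>^k" using a f1 by linarith
  qed
qed

lemma hp_line: "hp k f \<Longrightarrow> \<exists>p. \<forall>t. f (x + t *\<^sub>R (y - x)) = poly p t"
proof (induction rule: hp.induct)
  case (hp_const c) then show ?case by (intro exI[of _ "[:c:]"]) simp
next
  case (hp_zero k) then show ?case by (intro exI[of _ 0]) simp
next
  case (hp_coord v) then show ?case by (intro exI[of _ "[:x$v, y$v - x$v:]"]) (simp add: algebra_simps)
next
  case (hp_add k f g)
  then obtain p q where "\<forall>t. f (x + t *\<^sub>R (y - x)) = poly p t" "\<forall>t. g (x + t *\<^sub>R (y - x)) = poly q t" by blast
  then show ?case by (intro exI[of _ "p + q"]) simp
next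
  case (hp_mult i f j g)
  then obtain p q where "\<forall>t. f (x + t *\<^sub>R (y - x)) = poly p t" "\<forall>t. g (x + t *\<^sub>R (y - x)) = poly q t" by blast
  then show ?case by (intro exI[of _ "p * q"]) simp
next
  case (hp_mono k f) then show ?case by blast
qed

lemma hp_deriv: "hp k f \<Longrightarrow> \<exists>d. (\<forall>v. hp (k - 1) (d v)) \<and>
   (\<forall>x. (f has_derivative (\<lambda>h. \<Sum>v\<in>UNIV. h$v * d v x)) (at x))"
proof (induction rule: hp.induct)
  case (hp_const c) then show ?case
    by (intro exI[of _ "\<lambda>v x. 0"]) (simp add: hp.hp_zero)
next
  case (hp_zero k) then show ?case
    by (intro exI[of _ "\<lambda>v x. 0"]) (simp add: hp.hp_zero)
next
  case (hp_coord w)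
  have "(\<lambda>h::real^'a. \<Sum>v\<in>UNIV. h$v * (if v = w then 1 else 0)) = (\<lambda>h. h$w)"
    by (simp add: if_distrib cong: if_cong)
  moreover have "((\<lambda>x::real^'a. x$w) has_derivative (\<lambda>h. h$w)) (at x)" for x
    by (rule bounded_linear.has_derivative[OF bounded_linear_vec_nth has_derivative_ident])
  moreover have "hp (1 - 1) (\<lambda>x::real^'a. if v = w then 1 else 0)" for v
    by (simp add: hp.hp_const)
  ultimately show ?case
    by (intro exI[of _ "\<lambda>v x. if v = w then 1 else 0"]) simp
next
  case (hp_add k f g)
  then obtain df dg where f: "\<forall>v. hp (k - 1) (df v)" "\<forall>x. (f has_derivative (\<lambda>h. \<Sum>v\<in>UNIV. h$v * df v x)) (at x)"
    and g: "\<forall>v. hp (k - 1) (dg v)" "\<forall>x. (g has_derivative (\<lambda>h. \<Sum>v\<in>UNIV. h$v * dg v x)) (at x)" by blast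
  show ?case
  proof (intro exI[of _ "\<lambda>v x. df v x + dg v x"] conjI allI)
    fix v show "hp (k - 1) (\<lambda>x. df v x + dg v x)" using f g by (simp add: hp.hp_add)
  next
    fix x
    show "((\<lambda>x. f x + g x) has_derivative (\<lambda>h. \<Sum>v\<in>UNIV. h $ v * (df v x + dg v x))) (at x)"
      using has_derivative_add[OF f(2)[rule_format] g(2)[rule_format]]
      by (simp add: distrib_left sum.distrib)
  qed
next
  case (hp_mult i f j g)
  then obtain df dg where f: "\<forall>v. hp (i - 1) (df v)" "\<forall>x. (f has_derivative (\<lambda>h. \<Sum>v\<in>UNIV. h$v * df v x)) (at x)"
    and g: "\<forall>v. hp (j - 1) (dg v)" "\<forall>x. (g has_derivative (\<lambda>h. \<Sum>v\<in>UNIV. h$v * dg v x)) (at x)" by blast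
  show ?case
  proof (intro exI[of _ "\<lambda>v x. df v x * g x + f x * dg v x"] conjI allI)
    fix v
    have 1: "hp (i + j - 1) (\<lambda>x. df v x * g x)"
      by (rule hp_mult'[OF f(1)[rule_format] hp_mult.hyps(2)]) simp
    have 2: "hp (i + j - 1) (\<lambda>x. f x * dg v x)"
      by (rule hp_mult'[OF hp_mult.hyps(1) g(1)[rule_format]]) simp
    show "hp (i + j - 1) (\<lambda>x. df v x * g x + f x * dg v x)" by (rule hp.hp_add[OF 1 2])
  next
    fix x
    show "((\<lambda>x. f x * g x) has_derivative (\<lambda>h. \<Sum>v\<in>UNIV. h $ v * (df v x * g x + f x * dg v x))) (at x)"
      using has_derivative_mult[OF f(2)[rule_format] g(2)[rule_format]]
      by (simp add: distrib_left sum.distrib sum_distrib_left sum_distrib_right algebra_simps)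
  qed
next
  case (hp_mono k f)
  then obtain d where d: "\<forall>v. hp (Suc k - 1) (d v)" "\<forall>x. (f has_derivative (\<lambda>h. \<Sum>v\<in>UNIV. h$v * d v x)) (at x)"
    by blast
  have "\<forall>v. hp (k - 1) (d v)"
  proof
    fix v have "hp k (d v)" using d(1) by simp
    then show "hp (k - 1) (d v)" by (rule hp_mono_le) simp
  qed
  then show ?case using d(2) by blast
qed



definition chp :: "nat \<Rightarrow> (real^'v::finite \<Rightarrow> complex) \<Rightarrow> bool" where
  "chp d g \<longleftrightarrow> hp d (\<lambda>x. Re (g x)) \<and> hp d (\<lambda>x. Im (g x))"

lemma chp_const: "chp 0 (\<lambda>x. c)" by (simp add: chp_def hp_const)
lemma chp_zero: "chp k (\<lambda>x. 0)" by (simp add: chp_def hp_zero)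
lemma chp_add: "chp k f \<Longrightarrow> chp k g \<Longrightarrow> chp k (\<lambda>x. f x + g x)"
  by (simp add: chp_def hp_add)
lemma chp_mono_le: "chp k f \<Longrightarrow> j \<le> k \<Longrightarrow> chp j f"
  by (meson chp_def hp_mono_le)
lemma chp_mult: "chp i f \<Longrightarrow> chp j g \<Longrightarrow> k \<le> i + j \<Longrightarrow> chp k (\<lambda>x. f x * g x)"
  unfolding chp_def by (auto intro!: hp_diff hp_add hp_mult')
lemma chp_cnj: "chp k f \<Longrightarrow> chp k (\<lambda>x. cnj (f x))"
  unfolding chp_def by (auto intro: hp_neg)
lemma chp_sum: "finite A \<Longrightarrow> (\<And>a. a \<in> A \<Longrightarrow> chp k (f a)) \<Longrightarrow> chp k (\<lambda>x. \<Sum>a\<in>A. f a x)"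
  unfolding chp_def by (auto simp: Re_sum Im_sum intro!: hp_sum)
lemma chp_phi: "chp 1 (\<lambda>x. phi_of x $ a $ j)"
  unfolding chp_def phi_of_def by (simp add: hp_coord[simplified])
lemma chp_diff: "chp k f \<Longrightarrow> chp k g \<Longrightarrow> chp k (\<lambda>x. f x - g x)"
  by (simp add: chp_def hp_diff)

definition lexp :: "real \<Rightarrow> ('x \<Rightarrow> complex \<Rightarrow> complex) \<Rightarrow> (nat \<Rightarrow> 'x \<Rightarrow> complex) \<Rightarrow> bool" where
  "lexp M G a \<longleftrightarrow> (\<forall>x z. M < norm z \<longrightarrow> (\<lambda>n. a n x * inverse z ^ n) sums G x z)"

lemma lexp_add: "lexp M F a \<Longrightarrow> lexp M G b \<Longrightarrow> lexp M (\<lambda>x z. F x z + G x z) (\<lambda>n x. a n x + b n x)"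
  unfolding lexp_def by (auto simp: distrib_right intro: sums_add)

lemma lexp_diff: "lexp M F a \<Longrightarrow> lexp M G b \<Longrightarrow> lexp M (\<lambda>x z. F x z - G x z) (\<lambda>n x. a n x - b n x)"
  unfolding lexp_def by (auto simp: left_diff_distrib intro: sums_diff)

lemma lexp_multc: "lexp M G a \<Longrightarrow> lexp M (\<lambda>x z. G x z * g x) (\<lambda>n x. a n x * g x)"
  unfolding lexp_def by (auto simp: mult.commute mult.left_commute dest: sums_mult[where c="g _"])

lemma lexp_const: "lexp M (\<lambda>x z. g x) (\<lambda>n x. if n = 0 then g x else 0)"
  unfolding lexp_def
proof (intro allI impI)
  fix x and z :: complex
  have "(\<lambda>n. (if n = 0 then g x else 0) * inverse z ^ n) = (\<lambda>n. if n = 0 then g x else 0)" by auto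
  then show "(\<lambda>n. (if n = 0 then g x else 0) * inverse z ^ n) sums g x"
    using sums_single[of 0 "\<lambda>_. g x"] by simp
qed

lemma lexp_sum: "finite A \<Longrightarrow> (\<And>a. a \<in> A \<Longrightarrow> lexp M (G a) (c a)) \<Longrightarrow>
   lexp M (\<lambda>x z. \<Sum>a\<in>A. G a x z) (\<lambda>n x. \<Sum>a\<in>A. c a n x)"
proof (induction A rule: finite_induct)
  case empty then show ?case unfolding lexp_def by simp
next
  case (insert a A) then show ?case using lexp_add[of M "G a" "c a"] by simp
qed

lemma lexp_t:
  assumes "\<bar>l\<bar> \<le> M"
  shows "lexp M (\<lambda>x z. inverse (z - of_real l)) (\<lambda>n x. if n = 0 then 0 else of_real l ^ (n - 1))"
  unfolding lexp_def
proof (intro allI impI)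
  fix x and z :: complex assume z: "M < norm z"
  then have z0: "z \<noteq> 0" using assms by auto
  define q where "q = of_real l * inverse z"
  have "norm q = \<bar>l\<bar> / norm z" by (simp add: q_def norm_mult norm_inverse divide_inverse)
  also have "\<dots> < 1" using z assms z0 by (simp add: divide_simps)
  finally have "norm q < 1" .
  then have "(\<lambda>n. q ^ n) sums (1 / (1 - q))" by (rule geometric_sums)
  then have "(\<lambda>n. inverse z * q ^ n) sums (inverse z * (1 / (1 - q)))" by (rule sums_mult)
  moreover have "inverse z * (1 / (1 - q)) = inverse (z - of_real l)"
    using z0 \<open>norm q < 1\<close> by (auto simp: q_def field_simps)
  ultimately have "(\<lambda>n. (if Suc n = 0 then 0 else of_real l ^ (Suc n - 1)) * inverse z ^ Suc n) sums inverse (z - of_real l)"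
    by (simp add: q_def power_mult_distrib mult_ac)
  then show "(\<lambda>n. (if n = 0 then 0 else of_real l ^ (n - 1)) * inverse z ^ n) sums inverse (z - of_real l)"
    by (subst (asm) sums_Suc_iff) simp
qed

lemma lexp_mult:
  assumes "M \<ge> 0" "lexp M F a" "lexp M G b"
  shows "lexp M (\<lambda>x z. F x z * G x z) (\<lambda>n x. \<Sum>i\<le>n. a i x * b (n - i) x)"
  unfolding lexp_def
proof (intro allI impI)
  fix x and z :: complex assume z: "M < norm z"
  define r where "r = (norm z + M) / 2"
  have r: "M < r" "r < norm z" "0 < r" using z assms(1) by (auto simp: r_def)
  have w: "M < norm (of_real r :: complex)" using r by simp
  have "norm (inverse z) = 1 / norm z" "norm (inverse (of_real r :: complex)) = 1 / r"
    using r by (auto simp: norm_inverse divide_inverse)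
  then have nz: "norm (inverse z) < norm (inverse (of_real r :: complex))"
    using r by (simp add: frac_less2)
  have "summable (\<lambda>n. a n x * inverse (of_real r :: complex) ^ n)"
    using assms(2) w unfolding lexp_def by (blast intro: sums_summable)
  then have sa: "summable (\<lambda>n. norm (a n x * inverse z ^ n))"
    by (rule powser_insidea[OF _ nz])
  have "summable (\<lambda>n. b n x * inverse (of_real r :: complex) ^ n)"
    using assms(3) w unfolding lexp_def by (blast intro: sums_summable)
  then have sb: "summable (\<lambda>n. norm (b n x * inverse z ^ n))"
    by (rule powser_insidea[OF _ nz])
  have "(\<lambda>k. \<Sum>i\<le>k. (a i x * inverse z ^ i) * (b (k - i) x * inverse z ^ (k - i))) sums
      ((\<Sum>k. a k x * inverse z ^ k) * (\<Sum>k. b k x * inverse z ^ k))"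
    by (rule Cauchy_product_sums[OF sa sb])
  moreover have "(\<Sum>k. a k x * inverse z ^ k) = F x z" "(\<Sum>k. b k x * inverse z ^ k) = G x z"
    using assms(2,3) z by (auto simp: lexp_def sums_iff)
  moreover have "\<And>k. (\<Sum>i\<le>k. (a i x * inverse z ^ i) * (b (k - i) x * inverse z ^ (k - i)))
      = (\<Sum>i\<le>k. a i x * b (k - i) x) * inverse z ^ k"
  proof -
    fix k
    have "(\<Sum>i\<le>k. (a i x * inverse z ^ i) * (b (k - i) x * inverse z ^ (k - i)))
      = (\<Sum>i\<le>k. a i x * b (k - i) x * inverse z ^ k)"
    proof (intro sum.cong refl)
      fix i assume "i \<in> {..k}"
      then have "inverse z ^ i * inverse z ^ (k - i) = inverse z ^ k"
        by (simp flip: power_add)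
      then show "(a i x * inverse z ^ i) * (b (k - i) x * inverse z ^ (k - i)) = a i x * b (k - i) x * inverse z ^ k"
        by (metis mult.assoc mult.left_commute)
    qed
    then show "(\<Sum>i\<le>k. (a i x * inverse z ^ i) * (b (k - i) x * inverse z ^ (k - i)))
      = (\<Sum>i\<le>k. a i x * b (k - i) x) * inverse z ^ k" by (simp add: sum_distrib_right)
  qed
  ultimately show "(\<lambda>n. (\<Sum>i\<le>n. a i x * b (n - i) x) * inverse z ^ n) sums (F x z * G x z)" by simp
qed

definition lexd :: "real \<Rightarrow> nat \<Rightarrow> (real^'v::finite \<Rightarrow> complex \<Rightarrow> complex) \<Rightarrow> bool" where
  "lexd M d G \<longleftrightarrow> (\<exists>a. (\<forall>n. chp d (a n)) \<and> lexp M G a)"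

lemma lexd_add: "lexd M d F \<Longrightarrow> lexd M d G \<Longrightarrow> lexd M d (\<lambda>x z. F x z + G x z)"
proof -
  assume "lexd M d F" "lexd M d G"
  then obtain a b where a: "\<forall>n. chp d (a n)" "lexp M F a" and b: "\<forall>n. chp d (b n)" "lexp M G b"
    unfolding lexd_def by blast
  have "\<forall>n. chp d (\<lambda>x. a n x + b n x)" using a b by (simp add: chp_add)
  then show ?thesis unfolding lexd_def using lexp_add[OF a(2) b(2)]
    by (intro exI[of _ "\<lambda>n x. a n x + b n x"]) simp
qed
lemma lexd_diff: "lexd M d F \<Longrightarrow> lexd M d G \<Longrightarrow> lexd M d (\<lambda>x z. F x z - G x z)"
proof -
  assume "lexd M d F" "lexd M d G"
  then obtain a b where a: "\<forall>n. chp d (a n)" "lexp M F a" and b: "\<forall>n. chp d (b n)" "lexp M G b"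
    unfolding lexd_def by blast
  have "\<forall>n. chp d (\<lambda>x. a n x - b n x)" using a b by (simp add: chp_diff)
  then show ?thesis unfolding lexd_def using lexp_diff[OF a(2) b(2)]
    by (intro exI[of _ "\<lambda>n x. a n x - b n x"]) simp
qed
lemma lexd_mult: "M \<ge> 0 \<Longrightarrow> lexd M i F \<Longrightarrow> lexd M j G \<Longrightarrow> d \<le> i + j \<Longrightarrow> lexd M d (\<lambda>x z. F x z * G x z)"
proof -
  assume M: "M \<ge> 0" and F: "lexd M i F" and G: "lexd M j G" and d: "d \<le> i + j"
  from F G obtain a b where a: "\<forall>n. chp i (a n)" "lexp M F a" and b: "\<forall>n. chp j (b n)" "lexp M G b"
    unfolding lexd_def by blast
  have "\<forall>n. chp d (\<lambda>x. \<Sum>i\<le>n. a i x * b (n - i) x)"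
  proof
    fix n show "chp d (\<lambda>x. \<Sum>i\<le>n. a i x * b (n - i) x)"
    proof (rule chp_sum)
      fix l show "chp d (\<lambda>x. a l x * b (n - l) x)"
        using a(1) b(1) d by (intro chp_mult[of i _ j]) auto
    qed simp
  qed
  then show ?thesis unfolding lexd_def using lexp_mult[OF M a(2) b(2)]
    by (intro exI[of _ "\<lambda>n x. \<Sum>i\<le>n. a i x * b (n - i) x"]) simp
qed



lemma laurent_unique:
  fixes c d :: "nat \<Rightarrow> complex"
  assumes M: "M \<ge> 0"
    and c: "\<forall>z. M < norm z \<longrightarrow> (\<lambda>n. c n * inverse z ^ n) sums f z"
    and d: "\<forall>z. M < norm z \<longrightarrow> (\<lambda>n. d n * inverse z ^ n) sums f z"
  shows "c = d"
proof -
  define e where "e n = c n - d n" for n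
  define s where "s = 1 / (M + 1)"
  have s0: "0 < s" using M by (simp add: s_def)
  have S: "(\<lambda>n. e n * w ^ n) sums 0" if "w \<noteq> 0" "norm w < s" for w
  proof -
    have a: "norm w * (M + 1) < 1" using that M by (simp add: s_def field_simps)
    have nw: "0 < norm w" using that by simp
    have "norm w * (M + 1) = norm w + M * norm w" by (simp add: algebra_simps)
    then have "M * norm w < 1" using a nw by linarith
    then have "M < 1 / norm w" using nw by (simp add: field_simps)
    then have "M < norm (inverse w)" by (simp add: norm_inverse divide_inverse)
    then have h1: "(\<lambda>n. c n * inverse (inverse w) ^ n) sums f (inverse w)"
      and h2: "(\<lambda>n. d n * inverse (inverse w) ^ n) sums f (inverse w)" using c d by auto
    have "(\<lambda>n. c n * inverse (inverse w) ^ n - d n * inverse (inverse w) ^ n) sums (f (inverse w) - f (inverse w))"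
      using sums_diff[OF h1 h2] .
    then show ?thesis by (simp add: e_def left_diff_distrib)
  qed
  have "e n = 0" for n
  proof (induction n rule: less_induct)
    case (less n)
    have T: "(\<lambda>k. e (k + n) * w ^ k) sums 0" if w: "w \<noteq> 0" "norm w < s" for w
    proof -
      have "(\<lambda>k. e (k + n) * w ^ (k + n)) sums (0 - (\<Sum>i<n. e i * w ^ i))"
        using sums_split_initial_segment[OF S[OF w], of n] by simp
      then have "(\<lambda>k. e (k + n) * w ^ (k + n)) sums 0" using less by simp
      then have "(\<lambda>k. inverse (w ^ n) * (e (k + n) * w ^ (k + n))) sums (inverse (w ^ n) * 0)"
        by (rule sums_mult)
      moreover have "\<And>k. inverse (w ^ n) * (e (k + n) * w ^ (k + n)) = e (k + n) * w ^ k"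
        using w by (simp add: power_add field_simps)
      ultimately show ?thesis by simp
    qed
    have "((\<lambda>w::complex. 0) \<longlongrightarrow> (\<lambda>k. e (k + n)) 0) (at 0)"
      by (rule powser_limit_0_strong[OF s0, of "\<lambda>k. e (k + n)" "\<lambda>w. 0"]) (use T in auto)
    then have "0 = e (0 + n)" by (rule LIM_const_eq)
    then show ?case by simp
  qed
  then show ?thesis by (auto simp: e_def fun_eq_iff)
qed

lemma Cmat_entries: "Cmat $ 1 $ 1 = 1" "Cmat $ 2 $ 2 = -1" "Cmat $ 3 $ 3 = 0"
  "Cmat $ 1 $ 2 = 0" "Cmat $ 1 $ 3 = 0" "Cmat $ 2 $ 1 = 0" "Cmat $ 2 $ 3 = 0" "Cmat $ 3 $ 1 = 0" "Cmat $ 3 $ 2 = 0"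
  by (simp_all add: Cmat_def)

lemma charpoly3_eq: "charpoly3 A = [: -det A,
    A$1$1*A$2$2 - A$1$2*A$2$1 + A$1$1*A$3$3 - A$1$3*A$3$1 + A$2$2*A$3$3 - A$2$3*A$3$2,
    -(A$1$1 + A$2$2 + A$3$3), 1 :]"
proof -
  have "poly (charpoly3 A) t = poly [: -det A,
    A$1$1*A$2$2 - A$1$2*A$2$1 + A$1$1*A$3$3 - A$1$3*A$3$1 + A$2$2*A$3$3 - A$2$3*A$3$2,
    -(A$1$1 + A$2$2 + A$3$3), 1 :] t" for t
    unfolding charpoly3_def det_3[of A] by (simp add: det_3 algebra_simps)
  then show ?thesis by (intro poly_eq_poly_eq_iff[THEN iffD1] ext) 
qed

lemma coeff_cubic: "coeff [:a,b,c,d:] 0 = a" "coeff [:a,b,c,d:] 1 = b" "coeff [:a,b,c,d:] 2 = c"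
  by (simp_all add: numeral_2_eq_2)

lemma diff_3: "(3::nat) - 1 = 2" "(3::nat) - 2 = 1" "(3::nat) - 3 = 0" by simp_all

lemma pcoef_formulas:
  "pcoef 1 A = A$1$1 + A$2$2 + A$3$3"
  "pcoef 2 A = A$1$1*A$2$2 - A$1$2*A$2$1 + A$1$1*A$3$3 - A$1$3*A$3$1 + A$2$2*A$3$3 - A$2$3*A$3$2"
  "pcoef 3 A = det A"
proof -
  have c: "coeff (charpoly3 A) 0 = - det A"
    "coeff (charpoly3 A) 1 = A$1$1*A$2$2 - A$1$2*A$2$1 + A$1$1*A$3$3 - A$1$3*A$3$1 + A$2$2*A$3$3 - A$2$3*A$3$2"
    "coeff (charpoly3 A) 2 = -(A$1$1 + A$2$2 + A$3$3)"
    by (simp_all only: charpoly3_eq coeff_cubic)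
  show "pcoef 1 A = A$1$1 + A$2$2 + A$3$3"
    "pcoef 2 A = A$1$1*A$2$2 - A$1$2*A$2$1 + A$1$1*A$3$3 - A$1$3*A$3$1 + A$2$2*A$3$3 - A$2$3*A$3$2"
    "pcoef 3 A = det A"
    using c by (simp_all only: pcoef_def diff_3) simp_all
qed



definition Xf :: "('n::finite \<Rightarrow> real) \<Rightarrow> 3 \<Rightarrow> 3 \<Rightarrow> real^('n \<times> 3 \<times> 2) \<Rightarrow> complex \<Rightarrow> complex" where
  "Xf lam i j x z = (\<Sum>a\<in>UNIV. inverse (z - of_real (lam a)) * (phi_of x $ a $ i * cnj (phi_of x $ a $ j)))"

definition Xc :: "('n::finite \<Rightarrow> real) \<Rightarrow> 3 \<Rightarrow> 3 \<Rightarrow> nat \<Rightarrow> real^('n \<times> 3 \<times> 2) \<Rightarrow> complex" where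
  "Xc lam i j n x = (\<Sum>a\<in>UNIV. (if n = 0 then 0 else of_real (lam a) ^ (n - 1)) * (phi_of x $ a $ i * cnj (phi_of x $ a $ j)))"

definition MM :: "('n::finite \<Rightarrow> real) \<Rightarrow> real" where
  "MM lam = Max ((\<lambda>a. \<bar>lam a\<bar>) ` UNIV)"

lemma MM_ge: "\<bar>lam a\<bar> \<le> MM lam"
  unfolding MM_def by (rule Max_ge) auto

lemma MM_nonneg: "0 \<le> MM lam"
  using MM_ge[of lam undefined] by linarith

lemma lexp_X: "lexp (MM lam) (Xf lam i j) (Xc lam i j)"
proof -
  have "lexp (MM lam) (\<lambda>x z. \<Sum>a\<in>UNIV. inverse (z - of_real (lam a)) * (phi_of x $ a $ i * cnj (phi_of x $ a $ j)))
     (\<lambda>n x. \<Sum>a\<in>UNIV. (if n = 0 then 0 else of_real (lam a) ^ (n - 1)) * (phi_of x $ a $ i * cnj (phi_of x $ a $ j)))"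
    by (intro lexp_sum lexp_multc lexp_t MM_ge) auto
  then show ?thesis unfolding Xf_def[abs_def] Xc_def[abs_def] .
qed

lemma chp_Xc:
  fixes lam :: "'n::finite \<Rightarrow> real"
  shows "chp 2 (Xc lam i j n)"
  unfolding Xc_def[abs_def]
proof (rule chp_sum)
  fix a :: 'n
  have "chp 2 (\<lambda>x. phi_of x $ a $ i * cnj (phi_of x $ a $ j))"
    by (rule chp_mult[OF chp_phi chp_cnj[OF chp_phi]]) simp
  then show "chp 2 (\<lambda>x. (if n = 0 then 0 else of_real (lam a) ^ (n - 1)) * (phi_of x $ a $ i * cnj (phi_of x $ a $ j)))"
    by (rule chp_mult[OF chp_const]) simp
qed simp

lemma lexd_X: "lexd (MM lam) 2 (Xf lam i j)"
  unfolding lexd_def using lexp_X chp_Xc by blast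

lemma Lmat_entry: "Lmat lam (phi_of x) z $ i $ j = Cmat $ i $ j + Xf lam i j x z"
  by (simp add: Lmat_def Xf_def)

lemma pfun1: "pfun lam 1 (phi_of x) z = Xf lam 1 1 x z + Xf lam 2 2 x z + Xf lam 3 3 x z"
  unfolding pfun_def pcoef_formulas by (simp add: Lmat_entry Cmat_entries)

definition r2 :: "('n::finite \<Rightarrow> real) \<Rightarrow> real^('n \<times> 3 \<times> 2) \<Rightarrow> complex \<Rightarrow> complex" where
  "r2 lam x z = Xf lam 1 1 x z * Xf lam 2 2 x z - Xf lam 1 2 x z * Xf lam 2 1 x z
     + Xf lam 1 1 x z * Xf lam 3 3 x z - Xf lam 1 3 x z * Xf lam 3 1 x z
     + Xf lam 2 2 x z * Xf lam 3 3 x z - Xf lam 2 3 x z * Xf lam 3 2 x z"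

definition r3 :: "('n::finite \<Rightarrow> real) \<Rightarrow> real^('n \<times> 3 \<times> 2) \<Rightarrow> complex \<Rightarrow> complex" where
  "r3 lam x z = Xf lam 2 2 x z * Xf lam 3 3 x z - Xf lam 1 1 x z * Xf lam 3 3 x z
     - Xf lam 2 3 x z * Xf lam 3 2 x z + Xf lam 1 3 x z * Xf lam 3 1 x z
     + (Xf lam 1 1 x z * Xf lam 2 2 x z) * Xf lam 3 3 x z + (Xf lam 1 2 x z * Xf lam 2 3 x z) * Xf lam 3 1 x z
     + (Xf lam 1 3 x z * Xf lam 2 1 x z) * Xf lam 3 2 x z - (Xf lam 1 1 x z * Xf lam 2 3 x z) * Xf lam 3 2 x z
     - (Xf lam 1 2 x z * Xf lam 2 1 x z) * Xf lam 3 3 x z - (Xf lam 1 3 x z * Xf lam 2 2 x z) * Xf lam 3 1 x z"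

lemma pfun2: "pfun lam 2 (phi_of x) z = -1 + (Xf lam 2 2 x z - Xf lam 1 1 x z) + r2 lam x z"
  unfolding pfun_def pcoef_formulas by (simp add: Lmat_entry Cmat_entries r2_def algebra_simps)

lemma pfun3: "pfun lam 3 (phi_of x) z = - Xf lam 3 3 x z + r3 lam x z"
  unfolding pfun_def pcoef_formulas by (simp add: det_3 Lmat_entry Cmat_entries r3_def algebra_simps)

lemma lexd_XX: "lexd (MM lam) 4 (\<lambda>x z. Xf lam i j x z * Xf lam k l x z)"
  by (rule lexd_mult[OF MM_nonneg lexd_X lexd_X]) simp

lemma lexd_XXX: "lexd (MM lam) 4 (\<lambda>x z. (Xf lam i j x z * Xf lam k l x z) * Xf lam p q x z)"
  by (rule lexd_mult[OF MM_nonneg lexd_XX lexd_X]) simp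

lemma lexd_r2: "lexd (MM lam) 4 (r2 lam)"
  unfolding r2_def[abs_def]
  by (intro lexd_add lexd_diff lexd_XX)

lemma lexd_r3: "lexd (MM lam) 4 (r3 lam)"
  unfolding r3_def[abs_def]
  by (intro lexd_add lexd_diff lexd_XX lexd_XXX)



lemma laurent_coeffs_eq:
  assumes "lexp (MM lam) (\<lambda>x z. pfun lam k (phi_of x) z) a"
  shows "laurent_coeffs lam k (phi_of x) = (\<lambda>n. a n x)"
proof -
  have P: "\<forall>z. MM lam < norm z \<longrightarrow> (\<lambda>n. a n x * inverse z ^ n) sums pfun lam k (phi_of x) z"
    using assms unfolding lexp_def by blast
  show ?thesis
    unfolding laurent_coeffs_def MM_def[symmetric]
  proof (rule the_equality)
    show "\<forall>z. MM lam < norm z \<longrightarrow> (\<lambda>n. a n x * inverse z ^ n) sums pfun lam k (phi_of x) z" by (rule P)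
  next
    fix c assume "\<forall>z. MM lam < norm z \<longrightarrow> (\<lambda>n. c n * inverse z ^ n) sums pfun lam k (phi_of x) z"
    then show "c = (\<lambda>n. a n x)" using laurent_unique[OF MM_nonneg _ P] by blast
  qed
qed

definition sq :: "real^('n::finite \<times> 3 \<times> 2) \<Rightarrow> 'n \<Rightarrow> 3 \<Rightarrow> real" where
  "sq x a i = (x $ (a, i, 1))^2 + (x $ (a, i, 2))^2"

definition qc :: "nat \<Rightarrow> 3 \<Rightarrow> real" where
  "qc k j = (if k = 1 then 1 else if k = 2 then (if j = 1 then -1 else if j = 2 then 1 else 0)
             else (if j = 3 then -1 else 0))"

definition Qf :: "('n::finite \<Rightarrow> real) \<Rightarrow> nat \<Rightarrow> nat \<Rightarrow> real^('n \<times> 3 \<times> 2) \<Rightarrow> real" where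
  "Qf lam k m x = (\<Sum>a\<in>UNIV. lam a ^ m * (\<Sum>j\<in>UNIV. qc k j * sq x a j))"

lemma ReXc: "Re (Xc lam i i (Suc m) x) = (\<Sum>a\<in>UNIV. lam a ^ m * sq x a i)"
  unfolding Xc_def Re_sum
  by (intro sum.cong refl) (simp add: complex_mult_cnj sq_def phi_of_def flip: of_real_power)

lemma Q1: "Qf lam 1 m x = Re (Xc lam 1 1 (Suc m) x + Xc lam 2 2 (Suc m) x + Xc lam 3 3 (Suc m) x)"
  by (simp add: Qf_def ReXc qc_def sum_3 distrib_left sum.distrib)

lemma Q2: "Qf lam 2 m x = Re (Xc lam 2 2 (Suc m) x - Xc lam 1 1 (Suc m) x)"
  by (simp add: Qf_def ReXc qc_def sum_3 algebra_simps sum.distrib sum_subtractf)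

lemma Q3: "Qf lam 3 m x = Re (- Xc lam 3 3 (Suc m) x)"
  by (simp add: Qf_def ReXc qc_def sum_3 sum_negf)

lemma Ecoef_decomp:
  assumes "k \<in> {1,2,3}"
  shows "\<exists>b. (\<forall>n. chp 4 (b n)) \<and> (\<forall>x m. Ecoef lam k m (phi_of x) = Qf lam k m x + Re (b (Suc m) x))"
proof -
  have X: "\<And>i j. lexp (MM lam) (Xf lam i j) (Xc lam i j)" by (rule lexp_X)
  consider "k = 1" | "k = 2" | "k = 3" using assms by auto
  then show ?thesis
  proof cases
    case 1
    have "lexp (MM lam) (\<lambda>x z. pfun lam k (phi_of x) z)
         (\<lambda>n x. Xc lam 1 1 n x + Xc lam 2 2 n x + Xc lam 3 3 n x)"
      unfolding 1 pfun1 by (intro lexp_add X)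
    then show ?thesis
      by (intro exI[of _ "\<lambda>n x. 0"]) (auto simp: chp_zero Ecoef_def laurent_coeffs_eq 1 Q1 Q1[unfolded One_nat_def])
  next
    case 2
    obtain b where b: "\<forall>n. chp 4 (b n)" "lexp (MM lam) (r2 lam) b"
      using lexd_r2 unfolding lexd_def by blast
    have "lexp (MM lam) (\<lambda>x z. pfun lam k (phi_of x) z)
         (\<lambda>n x. ((if n = 0 then -1 else 0) + (Xc lam 2 2 n x - Xc lam 1 1 n x)) + b n x)"
      unfolding 2 pfun2 by (intro lexp_add lexp_diff X lexp_const b(2)[unfolded r2_def[abs_def]] b[folded r2_def[abs_def]])
    then show ?thesis using b
      by (intro exI[of _ b]) (auto simp: Ecoef_def laurent_coeffs_eq 2 Q2)
  next
    case 3
    obtain b where b: "\<forall>n. chp 4 (b n)" "lexp (MM lam) (r3 lam) b"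
      using lexd_r3 unfolding lexd_def by blast
    have "lexp (MM lam) (\<lambda>x z. pfun lam k (phi_of x) z)
         (\<lambda>n x. (0 - Xc lam 3 3 n x) + b n x)"
      unfolding 3 pfun3 using lexp_add[OF lexp_diff[OF lexp_const[where g="\<lambda>x. 0"] X] b(2)]
      by (simp add: if_distrib cong: if_cong)
    then show ?thesis using b
      by (intro exI[of _ b]) (auto simp: Ecoef_def laurent_coeffs_eq 3 Q3)
  qed
qed

lemma knat_range: "knat k \<in> {1,2,3}" by (simp add: knat_def)

lemma Emap_decomp:
  "\<exists>R. (\<forall>r. hp 4 (R r)) \<and> (\<forall>x r. Emap lam iota x $ r = Qf lam (knat (fst r)) (iota (snd r)) x + R r x)"
proof -
  have "\<forall>k\<in>{1,2,3}. \<exists>b. (\<forall>n. chp 4 (b n)) \<and> (\<forall>x m. Ecoef lam k m (phi_of x) = Qf lam k m x + Re (b (Suc m) x))"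
    using Ecoef_decomp by blast
  then obtain B where B: "\<forall>k\<in>{1,2,3}. (\<forall>n. chp 4 (B k n)) \<and> (\<forall>x m. Ecoef lam k m (phi_of x) = Qf lam k m x + Re (B k (Suc m) x))"
    by metis
  show ?thesis
  proof (intro exI[of _ "\<lambda>r x. Re (B (knat (fst r)) (Suc (iota (snd r))) x)"] conjI allI)
    fix r :: "3 \<times> 'a"
    have "\<forall>n. chp 4 (B (knat (fst r)) n)" using B knat_range by blast
    then show "hp 4 (\<lambda>x. Re (B (knat (fst r)) (Suc (iota (snd r))) x))" by (simp add: chp_def)
  next
    fix x r
    have "Ecoef lam (knat (fst r)) (iota (snd r)) (phi_of x) = Qf lam (knat (fst r)) (iota (snd r)) x
       + Re (B (knat (fst r)) (Suc (iota (snd r))) x)" using B knat_range by blast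
    then show "Emap lam iota x $ r = Qf lam (knat (fst r)) (iota (snd r)) x + Re (B (knat (fst r)) (Suc (iota (snd r))) x)"
      by (simp add: Emap_def)
  qed
qed



lemma vandermonde_zero:
  fixes lam :: "'n::finite \<Rightarrow> real" and w :: "'n \<Rightarrow> real"
  assumes inj: "inj lam" and h: "\<forall>m<CARD('n). (\<Sum>a\<in>UNIV. lam a ^ m * w a) = 0"
  shows "w b = 0"
proof -
  define P where "P = (\<Prod>a\<in>UNIV - {b}. [:- lam a, 1:])"
  have "degree P \<le> (\<Sum>a\<in>UNIV - {b}. degree [:- lam a, 1:])"
    unfolding P_def using degree_prod_sum_le[of "UNIV - {b}" "\<lambda>a. [:- lam a, 1:]"] by (simp add: o_def)
  also have "\<dots> = CARD('n) - 1" by (simp add: card_Diff_singleton)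
  finally have dP: "degree P \<le> CARD('n) - 1" .
  have "0 < CARD('n)" by (rule finite_UNIV_card_ge_0) simp
  then have degP: "degree P < CARD('n)" using dP by linarith
  have "(\<Sum>a\<in>UNIV. w a * poly P (lam a)) = (\<Sum>a\<in>UNIV. \<Sum>i\<le>degree P. coeff P i * (lam a ^ i * w a))"
    by (simp add: poly_altdef sum_distrib_left mult_ac)
  also have "\<dots> = (\<Sum>i\<le>degree P. coeff P i * (\<Sum>a\<in>UNIV. lam a ^ i * w a))"
    by (subst sum.swap) (simp add: sum_distrib_left)
  also have "\<dots> = 0" using h degP by (intro sum.neutral) auto
  finally have s0: "(\<Sum>a\<in>UNIV. w a * poly P (lam a)) = 0" .
  have "(\<Sum>a\<in>UNIV - {b}. w a * poly P (lam a)) = 0"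
  proof (rule sum.neutral, intro ballI)
    fix a assume "a \<in> UNIV - {b}"
    then have "poly P (lam a) = 0" unfolding P_def poly_prod
      by (intro prod_zero bexI[of _ a]) auto
    then show "w a * poly P (lam a) = 0" by simp
  qed
  moreover have "(\<Sum>a\<in>UNIV. w a * poly P (lam a)) = w b * poly P (lam b) + (\<Sum>a\<in>UNIV - {b}. w a * poly P (lam a))"
    by (rule sum.remove) auto
  ultimately have "(\<Sum>a\<in>UNIV. w a * poly P (lam a)) = w b * poly P (lam b)" by simp
  moreover have "poly P (lam b) \<noteq> 0"
    unfolding P_def poly_prod using inj by (auto simp: inj_eq)
  ultimately show ?thesis using s0 by simp
qed

lemma sum_V: "(\<Sum>v\<in>(UNIV::('n::finite \<times> 3 \<times> 2) set). f v) = (\<Sum>a\<in>UNIV. \<Sum>j\<in>UNIV. f (a, j, 1) + f (a, j, 2))"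
proof -
  have "(\<Sum>v\<in>(UNIV::('n \<times> 3 \<times> 2) set). f v) = (\<Sum>a\<in>UNIV. \<Sum>v\<in>(UNIV::(3 \<times> 2) set). f (a, v))"
    by (simp add: sum.cartesian_product UNIV_Times_UNIV[symmetric] del: UNIV_Times_UNIV)
  also have "\<dots> = (\<Sum>a\<in>UNIV. \<Sum>j\<in>UNIV. \<Sum>i\<in>(UNIV::2 set). f (a, j, i))"
    by (simp add: sum.cartesian_product UNIV_Times_UNIV[symmetric] del: UNIV_Times_UNIV)
  finally show ?thesis by (simp add: sum_2)
qed

lemma sum_S: "(\<Sum>s\<in>(UNIV::(3 \<times> 'n::finite) set). f s) = (\<Sum>j\<in>UNIV. \<Sum>a\<in>UNIV. f (j, a))"
  by (simp add: sum.cartesian_product UNIV_Times_UNIV[symmetric] del: UNIV_Times_UNIV)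

definition dQ :: "('n::finite \<Rightarrow> real) \<Rightarrow> nat \<Rightarrow> nat \<Rightarrow> 'n \<times> 3 \<times> 2 \<Rightarrow> real^('n \<times> 3 \<times> 2) \<Rightarrow> real" where
  "dQ lam k m v x = lam (fst v) ^ m * qc k (fst (snd v)) * 2 * x $ v"

lemma Qf_alt: "Qf lam k m x = (\<Sum>v\<in>UNIV. lam (fst v) ^ m * qc k (fst (snd v)) * (x $ v * x $ v))"
  unfolding sum_V Qf_def sq_def
  by (simp add: algebra_simps power2_eq_square sum_distrib_left)

lemma Qf_deriv: "(Qf lam k m has_derivative (\<lambda>h. \<Sum>v\<in>UNIV. h $ v * dQ lam k m v x)) (at x)"
proof -
  have "((\<lambda>x. \<Sum>v\<in>UNIV. lam (fst v) ^ m * qc k (fst (snd v)) * (x $ v * x $ v)) has_derivative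
      (\<lambda>h. \<Sum>v\<in>UNIV. lam (fst v) ^ m * qc k (fst (snd v)) * (x $ v * h $ v + h $ v * x $ v))) (at x)"
    by (intro has_derivative_sum has_derivative_mult_right has_derivative_mult
        bounded_linear.has_derivative[OF bounded_linear_vec_nth] has_derivative_ident)
  moreover have "(\<lambda>x. \<Sum>v\<in>UNIV. lam (fst v) ^ m * qc k (fst (snd v)) * (x $ v * x $ v)) = Qf lam k m"
    by (simp add: Qf_alt fun_eq_iff)
  moreover have "(\<lambda>h. \<Sum>v\<in>UNIV. lam (fst v) ^ m * qc k (fst (snd v)) * (x $ v * h $ v + h $ v * x $ v))
     = (\<lambda>h. \<Sum>v\<in>UNIV. h $ v * dQ lam k m v x)"
    by (simp add: dQ_def fun_eq_iff algebra_simps)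
  ultimately show ?thesis by simp
qed

lemma hp_dQ: "hp 0 (dQ lam k m v)"
  unfolding dQ_def by (rule hp_mult'[OF hp_const hp_coord]) simp

lemma vec_has_derivative:
  fixes f :: "'a::real_normed_vector \<Rightarrow> real^'m"
  assumes "\<And>i. ((\<lambda>x. f x $ i) has_derivative (\<lambda>h. f' h $ i)) (at x)"
  shows "(f has_derivative f') (at x)"
  using assms by (subst has_derivative_componentwise_within) (auto simp: Basis_vec_def inner_axis)

lemma det_scale: "det (\<chi> i j. c * (A::real^'k::finite^'k) $ i $ j) = c ^ CARD('k) * det A"
  unfolding det_def by (simp add: prod.distrib sum_distrib_left mult_ac)



theorem lemma5:
  fixes lam :: "'n::finite \<Rightarrow> real" and iota :: "'n \<Rightarrow> nat"
  assumes "inj lam" and "\<forall>a. lam a \<noteq> 0"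
    and "bij_betw iota UNIV {..<CARD('n)}"
  shows "\<exists>U::(real^('n \<times> 3 \<times> 2)) set. open U \<and> closure U = UNIV \<and>
           (\<forall>x\<in>U. Emap lam iota differentiable (at x) \<and>
                   rank (jacobian (Emap lam iota) (at x)) = 3 * CARD('n))"
proof -
  obtain R where R: "\<forall>r. hp 4 (R r)"
    "\<forall>x r. Emap lam iota x $ r = Qf lam (knat (fst r)) (iota (snd r)) x + R r x"
    using Emap_decomp by blast
  have "\<forall>r. \<exists>d. (\<forall>v. hp 3 (d v)) \<and> (\<forall>x. (R r has_derivative (\<lambda>h. \<Sum>v\<in>UNIV. h $ v * d v x)) (at x))"
  proof
    fix r show "\<exists>d. (\<forall>v. hp 3 (d v)) \<and> (\<forall>x. (R r has_derivative (\<lambda>h. \<Sum>v\<in>UNIV. h $ v * d v x)) (at x))"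
      using hp_deriv[OF R(1)[rule_format, of r]] by simp
  qed
  then have "\<exists>dR. \<forall>r. (\<forall>v. hp 3 (dR r v)) \<and> (\<forall>x. (R r has_derivative (\<lambda>h. \<Sum>v\<in>UNIV. h $ v * dR r v x)) (at x))"
    by (rule choice_iff[THEN iffD1])
  then obtain dR where dR0: "\<forall>r. (\<forall>v. hp 3 (dR r v)) \<and> (\<forall>x. (R r has_derivative (\<lambda>h. \<Sum>v\<in>UNIV. h $ v * dR r v x)) (at x))"
    by blast
  have dR: "\<And>r v. hp 3 (dR r v)"
    "\<And>r x. (R r has_derivative (\<lambda>h. \<Sum>v\<in>UNIV. h $ v * dR r v x)) (at x)"
    using dR0 by blast+
  define d where "d r v x = dQ lam (knat (fst r)) (iota (snd r)) v x + dR r v x" for r v x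
  define E' where "E' x h = (\<chi> r. \<Sum>v\<in>UNIV. h $ v * d r v x)" for x h
  have deriv: "(Emap lam iota has_derivative E' x) (at x)" for x
  proof (rule vec_has_derivative)
    fix r
    have "((\<lambda>x. Qf lam (knat (fst r)) (iota (snd r)) x + R r x) has_derivative
       (\<lambda>h. (\<Sum>v\<in>UNIV. h $ v * dQ lam (knat (fst r)) (iota (snd r)) v x) + (\<Sum>v\<in>UNIV. h $ v * dR r v x))) (at x)"
      by (intro has_derivative_add Qf_deriv dR)
    then show "((\<lambda>x. Emap lam iota x $ r) has_derivative (\<lambda>h. E' x h $ r)) (at x)"
      by (simp add: R(2) E'_def d_def distrib_left sum.distrib)
  qed
  define S where "S x = (\<chi> r s. d r (snd s, fst s, 1) x :: real^(3 \<times> 'n)^(3 \<times> 'n))" for x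
  define D where "D x = det (S x)" for x
  have hpd: "hp 0 (d r v)" for r v
    unfolding d_def[abs_def] by (intro hp_add hp_dQ hp_mono_le[OF dR(1)]) simp
  have hpD: "hp 0 D"
  proof -
    have eq: "D = (\<lambda>x. \<Sum>p\<in>{p. p permutes UNIV}. of_int (sign p) * (\<Prod>i\<in>UNIV. d i (snd (p i), fst (p i), 1) x))"
      by (simp add: D_def S_def det_def fun_eq_iff)
    have "hp 0 (\<lambda>x. \<Sum>p\<in>{p. p permutes UNIV}. of_int (sign p) * (\<Prod>i\<in>UNIV. d i (snd (p i), fst (p i), 1) x))"
      by (intro hp_sum hp_cmult hp_prod hpd) auto
    then show ?thesis using eq by simp
  qed
  have contD: "continuous (at x) D" for x
  proof -
    obtain dd where "\<forall>x. (D has_derivative (\<lambda>h. \<Sum>v\<in>UNIV. h $ v * dd v x)) (at x)"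
      using hp_deriv[OF hpD] by blast
    then show ?thesis using has_derivative_continuous by blast
  qed
  have rank: "rank (jacobian (Emap lam iota) (at x)) = 3 * CARD('n)" if Dx: "D x \<noteq> 0" for x
  proof -
    have jac: "jacobian (Emap lam iota) (at x) = matrix (E' x)"
      unfolding jacobian_def using frechet_derivative_at[OF deriv] by simp
    have lin: "linear (E' x)" using has_derivative_linear[OF deriv] .
    have surj: "range (E' x) = UNIV"
    proof -
      { fix y :: "real^(3 \<times> 'n)"
        have "invertible (S x)" using Dx by (simp add: invertible_det_nz D_def)
        then obtain A' where A': "S x ** A' = mat 1" unfolding invertible_def by blast
        define u where "u = A' *v y"
        have Su: "S x *v u = y" unfolding u_def by (simp add: matrix_vector_mul_assoc A')
        define h where "h = ((\<chi> v. if snd (snd v) = 1 then u $ (fst (snd v), fst v) else 0) :: real^('n \<times> 3 \<times> 2))"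
        have "E' x h = S x *v u"
        proof (subst vec_eq_iff, intro allI)
          fix r
          have "E' x h $ r = (\<Sum>a\<in>UNIV. \<Sum>j\<in>UNIV. u $ (j, a) * d r (a, j, 1) x)"
            by (simp add: E'_def sum_V h_def)
          also have "\<dots> = (S x *v u) $ r"
            by (simp add: matrix_vector_mult_def S_def sum_S mult.commute sum.swap[of _ "UNIV::'n set"])
          finally show "E' x h $ r = (S x *v u) $ r" .
        qed
        then have "y \<in> range (E' x)" using Su by (metis rangeI) }
      then show ?thesis by blast
    qed
    have "rank (matrix (E' x)) = dim (range (E' x))"
      by (simp add: rank_dim_range matrix_vector_mul(2)[OF lin])
    then show ?thesis by (simp add: jac surj)
  qed
  define x0 where "x0 = (\<chi> v. if snd (snd v) = 1 then 1 else 0 :: real^('n \<times> 3 \<times> 2))"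
  define M0 where "M0 = (\<chi> r s. lam (snd s) ^ iota (snd r) * qc (knat (fst r)) (fst s) * 2 :: real^(3 \<times> 'n)^(3 \<times> 'n))"
  define Mf where "Mf e = (\<chi> r s. M0 $ r $ s + dR r (snd s, fst s, 1) (e *\<^sub>R x0) / e :: real^(3 \<times> 'n)^(3 \<times> 'n))" for e :: real
  have SM: "S (e *\<^sub>R x0) = (\<chi> i j. e * Mf e $ i $ j)" if "e \<noteq> 0" for e
    using that by (simp add: S_def Mf_def M0_def d_def dQ_def x0_def vec_eq_iff field_simps)
  have DM: "D (e *\<^sub>R x0) = e ^ CARD(3 \<times> 'n) * det (Mf e)" if "e \<noteq> 0" for e
    using that by (simp add: D_def SM det_scale)
  have M0nz: "det M0 \<noteq> 0"
  proof -
    have "inj (\<lambda>u. M0 *v u)"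
    proof (subst linear_injective_0, simp, intro allI impI)
      fix u :: "real^(3 \<times> 'n)" assume u0: "M0 *v u = 0"
      define w where "w k a = (\<Sum>j\<in>UNIV. 2 * qc k j * u $ (j, a))" for k a
      have row: "(\<Sum>a'\<in>UNIV. lam a' ^ iota a * w (knat k) a') = 0" for k a
      proof -
        have "(M0 *v u) $ (k, a) = 0" using u0 by simp
        moreover have "(M0 *v u) $ (k, a) = (\<Sum>a'\<in>UNIV. lam a' ^ iota a * w (knat k) a')"
          by (simp add: matrix_vector_mult_def M0_def w_def sum_S sum_distrib_left mult_ac sum.swap[of _ "UNIV::'n set"])
        ultimately show ?thesis by simp
      qed
      have surjI: "iota ` UNIV = {..<CARD('n)}" using assms(3) by (rule bij_betw_imp_surj_on)
      have wz: "w (knat k) a = 0" for k a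
      proof (rule vandermonde_zero[OF assms(1)], intro allI impI)
        fix m assume "m < CARD('n)"
        then obtain a' where "iota a' = m" using surjI by (metis imageE lessThan_iff)
        then show "(\<Sum>a\<in>UNIV. lam a ^ m * w (knat k) a) = 0" using row[where k=k and a=a'] by simp
      qed
      have k1: "knat 1 = 1" and k2: "knat 2 = 2" and k3: "knat 3 = 3" by (simp_all add: knat_def)
      have "u $ (j, a) = 0" for j a
      proof -
        have e1: "u $ (1, a) + u $ (2, a) + u $ (3, a) = 0" using wz[where k=1 and a=a]
          by (simp add: w_def k1 qc_def sum_3 algebra_simps)
        have e2: "u $ (2, a) - u $ (1, a) = 0" using wz[where k=2 and a=a]
          by (simp add: w_def k2 qc_def sum_3 algebra_simps)
        have e3: "u $ (3, a) = 0" using wz[where k=3 and a=a]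
          by (simp add: w_def k3 qc_def sum_3 algebra_simps)
        show ?thesis using e1 e2 e3 exhaust_3[of j] by auto
      qed
      then show "u = 0" by (simp add: vec_eq_iff)
    qed
    then show ?thesis using det_nz_iff_inj[of "\<lambda>u. M0 *v u"] by simp
  qed
  have lim0: "((\<lambda>e. dR r v (e *\<^sub>R x0) / e) \<longlongrightarrow> 0) (at 0)" for r v
  proof -
    obtain C where C: "\<forall>e::real. \<bar>e\<bar> \<le> 1 \<longrightarrow> \<bar>dR r v (e *\<^sub>R x0)\<bar> \<le> C * \<bar>e\<bar>^3"
      using hp_bound[OF dR(1)] by blast
    have ev: "eventually (\<lambda>e. norm (dR r v (e *\<^sub>R x0) / e) \<le> C * e^2) (at (0::real))"
      unfolding eventually_at
    proof (intro exI[of _ 1] conjI allI ballI impI)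
      fix e :: real assume "e \<noteq> 0 \<and> dist e 0 < 1"
      then have e: "e \<noteq> 0" "\<bar>e\<bar> \<le> 1" by auto
      have "norm (dR r v (e *\<^sub>R x0) / e) = \<bar>dR r v (e *\<^sub>R x0)\<bar> / \<bar>e\<bar>" by (simp add: abs_div)
      also have "\<dots> \<le> C * \<bar>e\<bar>^3 / \<bar>e\<bar>" using C e by (intro divide_right_mono) auto
      also have "\<dots> = C * e^2" using e by (simp add: power3_eq_cube power2_eq_square)
      finally show "norm (dR r v (e *\<^sub>R x0) / e) \<le> C * e^2" .
    qed (simp)
    have "((\<lambda>e::real. C * e^2) \<longlongrightarrow> C * 0^2) (at 0)" by (intro tendsto_intros)
    then show ?thesis using Lim_null_comparison[OF ev] by simp
  qed
  have limM: "((\<lambda>e. det (Mf e)) \<longlongrightarrow> det M0) (at 0)"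
  proof -
    have ent: "((\<lambda>e. Mf e $ i $ j) \<longlongrightarrow> M0 $ i $ j) (at 0)" for i j
      using tendsto_add[OF tendsto_const lim0[of i "(snd j, fst j, 1)"], of "M0 $ i $ j"]
      by (simp add: Mf_def)
    show ?thesis unfolding det_def
      by (intro tendsto_sum tendsto_mult tendsto_const tendsto_prod ent)
  qed
  have "eventually (\<lambda>e. det (Mf e) \<noteq> 0 \<and> e \<noteq> 0) (at (0::real))"
    using tendsto_imp_eventually_ne[OF limM M0nz] eventually_at_filter[of "\<lambda>e. e \<noteq> 0"]
    by (auto elim: eventually_elim2 simp: eventually_at_filter)
  then obtain e where e: "det (Mf e) \<noteq> 0" "e \<noteq> 0" using eventually_happens'[OF at_neq_bot] by blast
  define x1 where "x1 = e *\<^sub>R x0"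
  have Dx1: "D x1 \<noteq> 0" using e by (simp add: x1_def DM)
  define U where "U = {x. D x \<noteq> 0}"
  have openU: "open U"
  proof -
    have "U = D -` (- {0})" by (auto simp: U_def)
    then show ?thesis using continuous_open_vimage[of "- {0}" D] contD by auto
  qed
  have closU: "closure U = UNIV"
  proof -
    { fix y0 :: "real^('n \<times> 3 \<times> 2)"
      have "y0 \<in> closure U" unfolding closure_approachable
      proof (intro allI impI)
        fix e :: real assume e0: "0 < e"
        obtain p where p: "\<forall>t. D (x1 + t *\<^sub>R (y0 - x1)) = poly p t" using hp_line[OF hpD] by blast
        have "poly p 0 \<noteq> 0" using p Dx1 by (metis add.right_neutral scale_zero_left)
        then have "p \<noteq> 0" by auto
        then have fin: "finite {t. poly p t = 0}" by (rule poly_roots_finite)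
        define n where "n = norm (y0 - x1)"
        define del where "del = min 1 (e / (n + 1))"
        have n0: "0 \<le> n" by (simp add: n_def)
        have del0: "0 < del" using e0 n0 by (simp add: del_def)
        have "infinite {1 - del<..<(1::real)}" using del0 by simp
        then have "infinite ({1 - del<..<(1::real)} - {t. poly p t = 0})"
          using fin by (rule Diff_infinite_finite[rotated])
        then have "{1 - del<..<(1::real)} - {t. poly p t = 0} \<noteq> {}" by (rule infinite_imp_nonempty)
        then obtain t where "t \<in> {1 - del<..<(1::real)} - {t. poly p t = 0}" by blast
        then have t: "t \<in> {1 - del<..<1}" "poly p t \<noteq> 0" by auto
        define y where "y = x1 + t *\<^sub>R (y0 - x1)"
        have "y \<in> U" using t p by (simp add: U_def y_def)
        moreover have "dist y y0 < e"
        proof -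
          have "y - y0 = (1 - t) *\<^sub>R (x1 - y0)" by (simp add: y_def algebra_simps)
          then have "dist y y0 = (1 - t) * n" using t
            by (simp add: dist_norm n_def norm_minus_commute)
          also have "\<dots> \<le> (1 - t) * (n + 1)" using t by (intro mult_left_mono) auto
          also have "\<dots> < del * (n + 1)" using t n0 by (intro mult_strict_right_mono) auto
          also have "\<dots> \<le> e / (n + 1) * (n + 1)" using n0 by (intro mult_right_mono) (auto simp: del_def)
          also have "\<dots> = e" using n0 by simp
          finally show ?thesis .
        qed
        ultimately show "\<exists>y\<in>U. dist y y0 < e" by blast
      qed }
    then show ?thesis by blast
  qed
  show ?thesis
  proof (intro exI[of _ U] conjI openU closU ballI)
    fix x assume "x \<in> U"
    then show "Emap lam iota differentiable (at x)" using deriv differentiable_def by blast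
    show "rank (jacobian (Emap lam iota) (at x)) = 3 * CARD('n)" using rank \<open>x \<in> U\<close> by (simp add: U_def)
  qed
qed

end
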